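(* Let $q>0$ with $q\neq1$, let $y:\mathbb{R}\to\mathbb{R}^2$ be a $2\pi$-periodic $C^2$ map, and let $\eta\in\mathbb{S}^1$. Define $\psi_\eta(\theta,\theta_\xi)=(\sqrt{q}\,\eta+\xi)\cdot y(\theta)$ and $\Psi_\eta(\theta,\theta_\xi)=-(\sqrt{q}\,\eta-\xi)\cdot y'(\theta)^\perp$, where $\xi=(\cos\theta_\xi,\sin\theta_\xi)^T$. If $(\theta,\theta_\xi)$ satisfies $\partial\psi_\eta/\partial\theta(\theta,\theta_\xi)=(\sqrt{q}\,\eta+\xi)\cdot y'(\theta)=0$, then $\Psi_\eta(\theta,\theta_\xi)=0$ if and only if $y'(\theta)=0$.
   Context: For $x=(x_1,x_2)^T\in\mathbb{R}^2$, $x^\perp=(-x_2,x_1)^T$. *)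

theory Defs
  imports "HOL-Analysis.Analysis"
begin

definition perp :: "real^2 \<Rightarrow> real^2" where
  "perp x = vector [- (x $ 2), x $ 1]"

definition unitvec :: "real \<Rightarrow> real^2" where
  "unitvec t = vector [cos t, sin t]"

definition psi_eta :: "real \<Rightarrow> (real \<Rightarrow> real^2) \<Rightarrow> real^2 \<Rightarrow> real \<Rightarrow> real \<Rightarrow> real" where
  "psi_eta q y \<eta> \<theta> \<theta>\<xi> = (sqrt q *\<^sub>R \<eta> + unitvec \<theta>\<xi>) \<bullet> y \<theta>"

definition Psi_eta :: "real \<Rightarrow> (real \<Rightarrow> real^2) \<Rightarrow> real^2 \<Rightarrow> real \<Rightarrow> real \<Rightarrow> real" where
  "Psi_eta q y \<eta> \<theta> \<theta>\<xi> = - ((sqrt q *\<^sub>R \<eta> - unitvec \<theta>\<xi>) \<bullet> perp (vector_derivative y (at \<theta>)))"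

end

theory Submission
  imports Defs
begin

lemma key:
  fixes e1 e2 c s v1 v2 r :: real
  assumes "e1^2 + e2^2 = 1" "c^2 + s^2 = 1" "r^2 \<noteq> 1"
    "(r*e1 + c)* v1 + (r*e2 + s)* v2 = 0"
    "(r*e1 - c)*(-v2) + (r*e2 - s)* v1 = 0"
  shows "v1 = 0 \<and> v2 = 0"
proof -
  have id: "(v1^2+v2^2)*((r*e1+c)*(r*e1-c) + (r*e2+s)*(r*e2-s))
    = ((r*e1 + c)* v1 + (r*e2 + s)* v2)*((r*e1-c)* v1 + (r*e2-s)* v2)
      + ((r*e1 + c)*(-v2) + (r*e2 + s)* v1)*((r*e1 - c)*(-v2) + (r*e2 - s)* v1)"
    by (simp add: algebra_simps power2_eq_square)
  have "(r*e1+c)*(r*e1-c) + (r*e2+s)*(r*e2-s) = r^2*(e1^2+e2^2) - (c^2+s^2)"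
    by (simp add: algebra_simps power2_eq_square)
  also have "\<dots> = r^2 - 1" using assms by simp
  finally have "(v1^2+v2^2)*(r^2-1) = 0" using id assms by simp
  then have "v1^2+v2^2 = 0" using assms(3) by simp
  then show ?thesis by (simp add: sum_power2_eq_zero_iff)
qed

theorem lemma1:
  fixes q :: real and y y' y'' :: "real \<Rightarrow> real^2" and \<eta> :: "real^2"
    and \<theta> \<theta>\<xi> :: real
  assumes q_pos: "q > 0" and q_ne1: "q \<noteq> 1"
    and periodic: "\<And>t. y (t + 2 * pi) = y t"
    and deriv1: "\<And>t. (y has_vector_derivative y' t) (at t)"
    and deriv2: "\<And>t. (y' has_vector_derivative y'' t) (at t)"
    and cont2: "continuous_on UNIV y''"
    and eta_unit: "norm \<eta> = 1"
    and crit: "((\<lambda>t. psi_eta q y \<eta> t \<theta>\<xi>) has_real_derivative 0) (at \<theta>)"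
  shows "Psi_eta q y \<eta> \<theta> \<theta>\<xi> = 0 \<longleftrightarrow> y' \<theta> = 0"
proof -
  define a where "a = sqrt q *\<^sub>R \<eta> + unitvec \<theta>\<xi>"
  have d: "((\<lambda>t. a \<bullet> y t) has_real_derivative a \<bullet> y' \<theta>) (at \<theta>)"
    using deriv1[of \<theta>] unfolding has_vector_derivative_def has_field_derivative_def
    by (auto intro!: derivative_eq_intros simp: inner_scaleR_right mult.commute)
  have "a \<bullet> y' \<theta> = 0"
    using DERIV_unique[OF d] crit unfolding psi_eta_def a_def by blast
  have vd: "vector_derivative y (at \<theta>) = y' \<theta>"
    using deriv1 vector_derivative_at by blast
  have n: "\<eta>$1^2 + \<eta>$2^2 = 1"
  proof -
    have "\<eta> \<bullet> \<eta> = 1" using eta_unit by (simp add: norm_eq_1)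
    then show ?thesis by (simp add: inner_vec_def sum_2 power2_eq_square)
  qed
  have r: "(sqrt q)^2 \<noteq> 1" using q_pos q_ne1 by simp
  show ?thesis
  proof
    assume P: "Psi_eta q y \<eta> \<theta> \<theta>\<xi> = 0"
    have "y' \<theta> $ 1 = 0 \<and> y' \<theta> $ 2 = 0"
      apply (rule key[OF n _ r, of "cos \<theta>\<xi>" "sin \<theta>\<xi>"])
      using P \<open>a \<bullet> y' \<theta> = 0\<close>
      by (auto simp: Psi_eta_def a_def vd perp_def unitvec_def inner_vec_def sum_2
          algebra_simps)
    then show "y' \<theta> = 0"
      by (metis (mono_tags, lifting) exhaust_2 vec_eq_iff zero_index)
  next
    assume "y' \<theta> = 0"
    then show "Psi_eta q y \<eta> \<theta> \<theta>\<xi> = 0"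
      by (simp add: Psi_eta_def vd perp_def inner_vec_def sum_2)
  qed
qed

end
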